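(* Let $\pi$ be a belief-based policy and $H\ge 0$. Assume $\mathcal X$ is convex, $c$ is continuously differentiable in $x$ and satisfies, for constants $K_c,K_g>0$ and all $(x,u)$, $|c(x,u)|\le K_c(1+\|x\|^2+\|u\|^2)$ and $\|\nabla_xc(x,u)\|\le K_g(1+\|x\|+\|u\|)$. Assume there is $M_\pi\in(0,\infty)$ such that almost surely, for all $t\ge0$, $\mathbb E_{x\sim b_t^\pi}\|x\|^2\le M_\pi$ and $\mathbb E_{x\sim\hat b_t^{(H),\pi}}\|x\|^2\le M_\pi$, and that there is $U_\pi\in(0,\infty)$ with $\|u_t\|^2\le U_\pi$ almost surely for all $t\ge0$, where $u_t=\pi(b_t^\pi)$. Then there is a finite constant $C_\pi>0$ independent of $H$ (one may take $C_\pi=L_\pi(1+U_\pi)$ with $L_\pi=K_g\sqrt{3+24M_\pi}$) such that $$|J(\pi)-\hat J_H(\pi)|\le\frac{C_\pi}{1-\gamma}\,\varepsilon_H(\pi).$$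
   Context: Setting: a discounted POMDP with Borel state space $\mathcal X\subset\mathbb R^n$, control space $\mathcal U\subset\mathbb R^m$, observation space $\mathcal Y\subset\mathbb R^p$, transition kernel $P(dx'\mid x,u)$, observation kernel $O(dy\mid x)$, measurable stage cost $c:\mathcal X\times\mathcal U\to\mathbb R$ and discount factor $\gamma\in(0,1)$. The system evolves as $x_{t+1}\sim P(\cdot\mid x_t,u_t)$, $y_t\sim O(\cdot\mid x_t)$, and at time $t$ the controller has the IO history $\zeta_t=(y_{0:t},u_{0:t-1})$. The belief is $b_t:=\mathbb P(x_t\in\cdot\mid\zeta_t)$. A belief-based policy $\pi$ selects $u_t=\pi(b_t)$; all processes generated in closed loop under $\pi$ live on one probability space with law $\mathbb P_\pi$ and expectation $\mathbb E_\pi$, and the resulting belief process is denoted $b_t^\pi$. For a memory length $H\ge0$, the truncated IO history is $\zeta_t^{(H)}:=(y_{\max(t-H,0):t},u_{\max(t-H,0):t-1})$ and the finite memory belief approximation is $\hat b_t^{(H),\pi}:=\mathbb P_\pi(x_t\in\cdot\mid\zeta_t^{(H)})$. $W_2$ is the Wasserstein-2 distance on probability measures on $\mathcal X$ with finite second moment. The policy-conditional belief mismatch is $\varepsilon_H(\pi):=\sup_{t\ge0}\mathbb E_\pi\big[W_2(b_t^\pi,\hat b_t^{(H),\pi})\big]$. The belief-level cost is $\bar c(b,u):=\int_{\mathcal X}c(x,u)\,b(dx)$. The true-belief cost is $J(\pi):=\mathbb E_\pi\big[\sum_{t\ge0}\gamma^t\bar c(b_t^\pi,u_t)\big]$ and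 the finite memory cost under the same closed-loop execution (same inputs $u_t=\pi(b_t^\pi)$) is $\hat J_H(\pi):=\mathbb E_\pi\big[\sum_{t\ge0}\gamma^t\bar c(\hat b_t^{(H),\pi},u_t)\big]$. *)

theory Defs
  imports "HOL-Probability.Probability"
begin

definition pre_sets :: "'w measure \<Rightarrow> ('w \<Rightarrow> 'v::topological_space) \<Rightarrow> 'w set set" where
  "pre_sets M f = {f -` A \<inter> space M | A. A \<in> sets borel}"

(* sigma-algebra generated by the (truncated) IO history y_{s..t}, u_{s..t-1} *)
definition hist_alg :: "'w measure \<Rightarrow> (nat \<Rightarrow> 'w \<Rightarrow> 'c::topological_space)
    \<Rightarrow> (nat \<Rightarrow> 'w \<Rightarrow> 'b::topological_space) \<Rightarrow> nat \<Rightarrow> nat \<Rightarrow> 'w measure" where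
  "hist_alg M y u s t = sigma (space M)
     ((\<Union>k\<in>{s..t}. pre_sets M (y k)) \<union> (\<Union>k\<in>{s..<t}. pre_sets M (u k)))"

definition cond_distr :: "'w measure \<Rightarrow> 'w measure \<Rightarrow> ('w \<Rightarrow> 'v::topological_space)
    \<Rightarrow> ('w \<Rightarrow> 'v measure) \<Rightarrow> bool" where
  "cond_distr M F X B \<longleftrightarrow> space F = space M \<and> sets F \<subseteq> sets M \<and> X \<in> borel_measurable M \<and>
     B \<in> measurable F (prob_algebra borel) \<and>
     (\<forall>A\<in>sets borel. \<forall>G\<in>sets F.
        emeasure M (G \<inter> X -` A) = (\<integral>\<^sup>+ \<omega>. indicator G \<omega> * emeasure (B \<omega>) A \<partial>M))"

definition couplings :: "'a::euclidean_space measure \<Rightarrow> 'a measure \<Rightarrow> ('a \<times> 'a) measure set" where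
  "couplings \<mu> \<nu> = {\<gamma>. prob_space \<gamma> \<and> sets \<gamma> = sets (borel \<Otimes>\<^sub>M borel) \<and>
       distr \<gamma> borel fst = \<mu> \<and> distr \<gamma> borel snd = \<nu>}"

(* Wasserstein-2 distance (meaningful for measures with finite second moment) *)
definition W2 :: "'a::euclidean_space measure \<Rightarrow> 'a measure \<Rightarrow> real" where
  "W2 \<mu> \<nu> = sqrt (enn2real (INF \<gamma>\<in>couplings \<mu> \<nu>.
      \<integral>\<^sup>+ p. ennreal ((norm (fst p - snd p))\<^sup>2) \<partial>\<gamma>))"

definition cbar :: "('a::euclidean_space \<Rightarrow> 'b \<Rightarrow> real) \<Rightarrow> 'a measure \<Rightarrow> 'b \<Rightarrow> real" where
  "cbar c b v = (\<integral>x. c x v \<partial>b)"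

definition disc_cost :: "'w measure \<Rightarrow> real \<Rightarrow> ('a::euclidean_space \<Rightarrow> 'b \<Rightarrow> real)
    \<Rightarrow> (nat \<Rightarrow> 'w \<Rightarrow> 'a measure) \<Rightarrow> (nat \<Rightarrow> 'w \<Rightarrow> 'b) \<Rightarrow> real" where
  "disc_cost M g c bb u = (\<integral>\<omega>. (\<Sum>t. g ^ t * cbar c (bb t \<omega>) (u t \<omega>)) \<partial>M)"

definition belief_mismatch :: "'w measure \<Rightarrow> (nat \<Rightarrow> 'w \<Rightarrow> 'a::euclidean_space measure)
    \<Rightarrow> (nat \<Rightarrow> 'w \<Rightarrow> 'a measure) \<Rightarrow> ennreal" where
  "belief_mismatch M b bh = (SUP t. \<integral>\<^sup>+ \<omega>. ennreal (W2 (b t \<omega>) (bh t \<omega>)) \<partial>M)"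

end

theory Submission
  imports Defs
begin

lemma mvt_bound:
  fixes f :: "'a::euclidean_space \<Rightarrow> real" and D :: "'a \<Rightarrow> 'a"
  assumes cx: "convex X"
    and der: "\<And>z. z \<in> X \<Longrightarrow> (f has_derivative (\<lambda>h. D z \<bullet> h)) (at z within X)"
    and Db: "\<And>z. z \<in> X \<Longrightarrow> norm (D z) \<le> K * (a + norm z)"
    and x: "x \<in> X" and y: "y \<in> X" and K: "K \<ge> 0" and a: "a \<ge> 0"
  shows "\<bar>f x - f y\<bar> \<le> K * (a + norm x + norm y) * norm (x - y)"
proof -
  let ?S = "closed_segment x y"
  have sub: "?S \<subseteq> X" using closed_segment_subset[OF x y cx] .
  have "norm (f x - f y) \<le> K * (a + norm x + norm y) * norm (x - y)"
  proof (rule differentiable_bound[where f'="\<lambda>z h. D z \<bullet> h"])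
    show "convex ?S" by simp
    show "(f has_derivative (\<lambda>h. D z \<bullet> h)) (at z within ?S)" if "z \<in> ?S" for z
      using der[of z] sub that by (auto intro: has_derivative_subset)
    show "onorm (\<lambda>h. D z \<bullet> h) \<le> K * (a + norm x + norm y)" if z: "z \<in> ?S" for z
    proof (rule onorm_le)
      fix h
      have nz: "norm z \<le> norm x + norm y"
      proof -
        from z obtain u where u: "0 \<le> u" "u \<le> 1" "z = (1 - u) *\<^sub>R x + u *\<^sub>R y"
          by (auto simp: in_segment)
        have "norm z \<le> norm ((1 - u) *\<^sub>R x) + norm (u *\<^sub>R y)" using u(3) norm_triangle_ineq by metis
        also have "\<dots> = (1-u) * norm x + u * norm y" using u by simp
        also have "\<dots> \<le> norm x + norm y" using u
          by (smt (verit, ccfv_SIG) mult_left_le_one_le norm_ge_zero)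
        finally show ?thesis .
      qed
      have "norm (D z \<bullet> h) \<le> norm (D z) * norm h"
        by (simp add: Cauchy_Schwarz_ineq2)
      also have "\<dots> \<le> K * (a + norm z) * norm h"
        using Db[of z] z sub by (intro mult_right_mono) auto
      also have "\<dots> \<le> K * (a + norm x + norm y) * norm h"
        using nz K by (intro mult_right_mono mult_left_mono) auto
      finally show "norm (D z \<bullet> h) \<le> K * (a + norm x + norm y) * norm h" .
    qed
  qed auto
  then show ?thesis by simp
qed

lemma integral_measurable_subprob_algebra2:
  fixes f :: "'x \<Rightarrow> 'y \<Rightarrow> real"
  assumes f[measurable]: "(\<lambda>(x, y). f x y) \<in> borel_measurable (M \<Otimes>\<^sub>M N)"
  assumes L[measurable]: "L \<in> measurable M (subprob_algebra N)"
  shows "(\<lambda>x. integral\<^sup>L (L x) (f x)) \<in> borel_measurable M"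
proof -
  note integral_measurable_subprob_algebra[measurable]
  note measurable_distr2[measurable]
  have "(\<lambda>x. integral\<^sup>L (distr (L x) (M \<Otimes>\<^sub>M N) (\<lambda>y. (x, y))) (\<lambda>(x, y). f x y)) \<in> borel_measurable M"
    by measurable
  then show ?thesis
    by (rule measurable_cong[THEN iffD1, rotated])
       (simp add: integral_distr)
qed


lemma coupling_basic:
  assumes "\<gamma> \<in> couplings \<mu> \<nu>"
  shows "prob_space \<gamma>" "sets \<gamma> = sets (borel \<Otimes>\<^sub>M borel)"
    "distr \<gamma> borel fst = \<mu>" "distr \<gamma> borel snd = \<nu>"
    "fst \<in> measurable \<gamma> borel" "snd \<in> measurable \<gamma> borel"
  using assms unfolding couplings_def
  by (auto simp: measurable_cong_sets[OF _ refl, of \<gamma> "borel \<Otimes>\<^sub>M borel"])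

lemma coupling_nn:
  assumes g: "\<gamma> \<in> couplings \<mu> \<nu>" and h: "h \<in> borel_measurable borel"
  shows "(\<integral>\<^sup>+ p. h (fst p) \<partial>\<gamma>) = (\<integral>\<^sup>+ z. h z \<partial>\<mu>)"
    "(\<integral>\<^sup>+ p. h (snd p) \<partial>\<gamma>) = (\<integral>\<^sup>+ z. h z \<partial>\<nu>)"
proof -
  note c = coupling_basic[OF g]
  show "(\<integral>\<^sup>+ p. h (fst p) \<partial>\<gamma>) = (\<integral>\<^sup>+ z. h z \<partial>\<mu>)"
  proof -
    have hm: "h \<in> borel_measurable (distr \<gamma> borel fst)" using h by simp
    show ?thesis using nn_integral_distr[OF c(5) hm] unfolding c(3) by simp
  qed
  show "(\<integral>\<^sup>+ p. h (snd p) \<partial>\<gamma>) = (\<integral>\<^sup>+ z. h z \<partial>\<nu>)"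
  proof -
    have hm: "h \<in> borel_measurable (distr \<gamma> borel snd)" using h by simp
    show ?thesis using nn_integral_distr[OF c(6) hm] unfolding c(4) by simp
  qed
qed

lemma coupling_int:
  fixes h :: "'a::euclidean_space \<Rightarrow> real"
  assumes g: "\<gamma> \<in> couplings \<mu> \<nu>" and h: "h \<in> borel_measurable borel"
  shows "integral\<^sup>L \<gamma> (\<lambda>p. h (fst p)) = integral\<^sup>L \<mu> h"
    "integral\<^sup>L \<gamma> (\<lambda>p. h (snd p)) = integral\<^sup>L \<nu> h"
    "integrable \<mu> h \<Longrightarrow> integrable \<gamma> (\<lambda>p. h (fst p))"
    "integrable \<nu> h \<Longrightarrow> integrable \<gamma> (\<lambda>p. h (snd p))"
proof -
  note c = coupling_basic[OF g]
  show "integral\<^sup>L \<gamma> (\<lambda>p. h (fst p)) = integral\<^sup>L \<mu> h"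
    using integral_distr[OF c(5) h] c(3) by simp
  show "integral\<^sup>L \<gamma> (\<lambda>p. h (snd p)) = integral\<^sup>L \<nu> h"
    using integral_distr[OF c(6) h] c(4) by simp
  show "integrable \<mu> h \<Longrightarrow> integrable \<gamma> (\<lambda>p. h (fst p))"
    using integrable_distr_eq[OF c(5) h] c(3) by simp
  show "integrable \<nu> h \<Longrightarrow> integrable \<gamma> (\<lambda>p. h (snd p))"
    using integrable_distr_eq[OF c(6) h] c(4) by simp
qed

lemma coupling_AE:
  fixes X :: "'a::euclidean_space set"
  assumes g: "\<gamma> \<in> couplings \<mu> \<nu>" and X: "X \<in> sets borel"
    and a1: "AE z in \<mu>. z \<in> X" and a2: "AE z in \<nu>. z \<in> X"
  shows "AE p in \<gamma>. fst p \<in> X \<and> snd p \<in> X"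
proof -
  note c = coupling_basic[OF g]
  have "AE z in distr \<gamma> borel fst. z \<in> X" unfolding c(3) by (rule a1)
  then have 1: "AE p in \<gamma>. fst p \<in> X"
    using AE_distr_iff[OF c(5), of "\<lambda>z. z \<in> X"] X by simp
  have "AE z in distr \<gamma> borel snd. z \<in> X" unfolding c(4) by (rule a2)
  then have 2: "AE p in \<gamma>. snd p \<in> X"
    using AE_distr_iff[OF c(6), of "\<lambda>z. z \<in> X"] X by simp
  from 1 2 show ?thesis by eventually_elim auto
qed

lemma prod_coupling:
  fixes \<mu> \<nu> :: "'a::euclidean_space measure"
  assumes p1: "prob_space \<mu>" and p2: "prob_space \<nu>"
    and s1: "sets \<mu> = sets borel" and s2: "sets \<nu> = sets borel"
  shows "\<mu> \<Otimes>\<^sub>M \<nu> \<in> couplings \<mu> \<nu>"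
proof -
  interpret pp: pair_prob_space \<mu> \<nu>
    using p1 p2 by (simp add: pair_prob_space_def pair_sigma_finite_def prob_space_imp_sigma_finite)
  have sp: "sets (\<mu> \<Otimes>\<^sub>M \<nu>) = sets (borel \<Otimes>\<^sub>M borel)"
    using s1 s2 by (rule sets_pair_measure_cong)
  have sp1: "space \<mu> = UNIV" "space \<nu> = UNIV"
    using sets_eq_imp_space_eq[OF s1] sets_eq_imp_space_eq[OF s2] by auto
  have "distr (\<mu> \<Otimes>\<^sub>M \<nu>) borel fst = distr (\<mu> \<Otimes>\<^sub>M \<nu>) \<mu> fst"
    by (rule distr_cong) (auto simp: s1)
  also have "\<dots> = \<mu>" by (rule pp.M2.distr_pair_fst)
  finally have d1: "distr (\<mu> \<Otimes>\<^sub>M \<nu>) borel fst = \<mu>" .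
  have d2: "distr (\<mu> \<Otimes>\<^sub>M \<nu>) borel snd = \<nu>"
  proof (rule measure_eqI)
    show "sets (distr (\<mu> \<Otimes>\<^sub>M \<nu>) borel snd) = sets \<nu>" using s2 by simp
    fix A assume "A \<in> sets (distr (\<mu> \<Otimes>\<^sub>M \<nu>) borel snd)"
    then have A: "A \<in> sets borel" by simp
    have ms: "snd \<in> measurable (\<mu> \<Otimes>\<^sub>M \<nu>) borel"
      using measurable_snd[of \<mu> \<nu>] measurable_cong_sets[OF refl s2] by blast
    have e: "snd -` A \<inter> space (\<mu> \<Otimes>\<^sub>M \<nu>) = space \<mu> \<times> A"
      by (auto simp: space_pair_measure sp1)
    have "emeasure (distr (\<mu> \<Otimes>\<^sub>M \<nu>) borel snd) A = emeasure (\<mu> \<Otimes>\<^sub>M \<nu>) (space \<mu> \<times> A)"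
      using emeasure_distr[OF ms A] unfolding e .
    also have "\<dots> = emeasure \<mu> (space \<mu>) * emeasure \<nu> A"
      using A s2 by (intro pp.M2.emeasure_pair_measure_Times) auto
    finally show "emeasure (distr (\<mu> \<Otimes>\<^sub>M \<nu>) borel snd) A = emeasure \<nu> A"
      by (simp add: pp.M1.emeasure_space_1)
  qed
  show ?thesis unfolding couplings_def using pp.prob_space_axioms sp d1 d2 by auto
qed


lemma amgm_lam:
  fixes w d l :: real assumes "l > 0"
  shows "w * d \<le> (l * w\<^sup>2 + d\<^sup>2 / l) / 2"
proof -
  have "0 \<le> (l * w - d)\<^sup>2 / l" using assms by simp
  also have "(l * w - d)\<^sup>2 / l = l * w\<^sup>2 + d\<^sup>2 / l - 2 * w * d"
    using assms by (simp add: field_simps power2_eq_square)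
  finally show ?thesis by simp
qed

lemma opt_lam:
  fixes D K A i :: real
  assumes h: "\<And>l. l > 0 \<Longrightarrow> D \<le> K / 2 * (l * A + i / l)"
    and A: "A > 0" and i: "i \<ge> 0" and K: "K > 0"
  shows "D \<le> K * sqrt A * sqrt i"
proof (cases "i > 0")
  case True
  define l where "l = sqrt i / sqrt A"
  have l: "l > 0" using True A by (simp add: l_def)
  have "l * A = sqrt A * sqrt i"
    using A unfolding l_def by (simp add: field_simps)
  moreover have "i / l = sqrt A * sqrt i"
    using A True unfolding l_def by (simp add: field_simps)
  ultimately have "K / 2 * (l * A + i / l) = K * sqrt A * sqrt i" by simp
  with h[OF l] show ?thesis by linarith
next
  case False
  then have i0: "i = 0" using i by simp
  show ?thesis
  proof (rule ccontr)
    assume "\<not> ?thesis"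
    then have Dp: "D > 0" using i0 by simp
    define l where "l = D / (K * A)"
    have l: "l > 0" using Dp K A by (simp add: l_def)
    have "K / 2 * (l * A + i / l) = D / 2" using K A i0 by (simp add: l_def field_simps)
    with h[OF l] Dp show False by simp
  qed
qed

lemma mom:
  fixes \<mu> :: "'a::euclidean_space measure"
  assumes m: "(\<integral>\<^sup>+ z. ennreal ((norm z)\<^sup>2) \<partial>\<mu>) \<le> ennreal Mb" and s: "sets \<mu> = sets borel"
    and Mb: "Mb \<ge> 0"
  shows "integrable \<mu> (\<lambda>z. (norm z)\<^sup>2)" "integral\<^sup>L \<mu> (\<lambda>z. (norm z)\<^sup>2) \<le> Mb"
proof -
  have meas0: "(\<lambda>z::'a. (norm z)\<^sup>2) \<in> borel_measurable borel"
    by measurable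
  have meas: "(\<lambda>z::'a. (norm z)\<^sup>2) \<in> borel_measurable \<mu>"
    using measurable_cong_sets[OF s refl] meas0 by blast
  show int: "integrable \<mu> (\<lambda>z. (norm z)\<^sup>2)"
  proof (rule integrableI_bounded[OF meas])
    have "(\<integral>\<^sup>+ z. ennreal (norm ((norm z)\<^sup>2)) \<partial>\<mu>) = (\<integral>\<^sup>+ z. ennreal ((norm z)\<^sup>2) \<partial>\<mu>)" by simp
    also have "\<dots> < \<infinity>" using m by (simp add: le_less_trans)
    finally show "(\<integral>\<^sup>+ z. ennreal (norm ((norm z)\<^sup>2)) \<partial>\<mu>) < \<infinity>" .
  qed
  have "ennreal (integral\<^sup>L \<mu> (\<lambda>z. (norm z)\<^sup>2)) = (\<integral>\<^sup>+ z. ennreal ((norm z)\<^sup>2) \<partial>\<mu>)"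
    using nn_integral_eq_integral[OF int] by simp
  with m have "ennreal (integral\<^sup>L \<mu> (\<lambda>z. (norm z)\<^sup>2)) \<le> ennreal Mb" by simp
  then show "integral\<^sup>L \<mu> (\<lambda>z. (norm z)\<^sup>2) \<le> Mb" using Mb by (simp add: ennreal_le_iff)
qed

lemma int_growth:
  fixes \<mu> :: "'a::euclidean_space measure" and f :: "'a \<Rightarrow> real"
  assumes m: "(\<integral>\<^sup>+ z. ennreal ((norm z)\<^sup>2) \<partial>\<mu>) \<le> ennreal Mb" and s: "sets \<mu> = sets borel"
    and Mb: "Mb \<ge> 0" and ae: "AE z in \<mu>. z \<in> X" and fm: "f \<in> borel_measurable borel"
    and fb: "\<And>z. z \<in> X \<Longrightarrow> \<bar>f z\<bar> \<le> C * (1 + (norm z)\<^sup>2)"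
    and p: "prob_space \<mu>"
  shows "integrable \<mu> f"
proof -
  note mm = mom[OF m s Mb]
  have fm': "f \<in> borel_measurable \<mu>" using measurable_cong_sets[OF s refl] fm by blast
  have i2: "integrable \<mu> (\<lambda>z. C * (1 + (norm z)\<^sup>2))"
    using mm(1) p by (intro integrable_mult_right Bochner_Integration.integrable_add) (auto simp: finite_measure.integrable_const prob_space.finite_measure)
  show ?thesis
  proof (rule Bochner_Integration.integrable_bound[OF i2 fm'])
    show "AE x in \<mu>. norm (f x) \<le> norm (C * (1 + (norm x)\<^sup>2))"
      using ae
    proof eventually_elim
      case (elim z)
      then show ?case using fb[of z] by simp
    qed
  qed
qed


lemma core:
  fixes \<mu> \<nu> :: "'a::euclidean_space measure" and f :: "'a \<Rightarrow> real" and Df :: "'a \<Rightarrow> 'a"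
  assumes p1: "prob_space \<mu>" and p2: "prob_space \<nu>"
    and s1: "sets \<mu> = sets borel" and s2: "sets \<nu> = sets borel"
    and X: "X \<in> sets borel" and cx: "convex X"
    and ae1: "AE z in \<mu>. z \<in> X" and ae2: "AE z in \<nu>. z \<in> X"
    and fm: "f \<in> borel_measurable borel"
    and der: "\<And>z. z \<in> X \<Longrightarrow> (f has_derivative (\<lambda>h. Df z \<bullet> h)) (at z within X)"
    and Db: "\<And>z. z \<in> X \<Longrightarrow> norm (Df z) \<le> K * (a + norm z)"
    and K: "K > 0" and a: "a \<ge> 0" and Mb: "Mb > 0"
    and fb: "\<And>z. z \<in> X \<Longrightarrow> \<bar>f z\<bar> \<le> C * (1 + (norm z)\<^sup>2)"
    and m1: "(\<integral>\<^sup>+ z. ennreal ((norm z)\<^sup>2) \<partial>\<mu>) \<le> ennreal Mb"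
    and m2: "(\<integral>\<^sup>+ z. ennreal ((norm z)\<^sup>2) \<partial>\<nu>) \<le> ennreal Mb"
  shows "\<bar>integral\<^sup>L \<mu> f - integral\<^sup>L \<nu> f\<bar> \<le> K * sqrt (2 * a\<^sup>2 + 8 * Mb) * W2 \<mu> \<nu>"
proof -
  define A where "A = 2 * a\<^sup>2 + 8 * Mb"
  have A: "A > 0" using Mb a by (simp add: A_def add_nonneg_pos)
  define \<Delta> where "\<Delta> = \<bar>integral\<^sup>L \<mu> f - integral\<^sup>L \<nu> f\<bar>"
  define I where "I \<gamma> = (\<integral>\<^sup>+ p. ennreal ((norm (fst p - snd p))\<^sup>2) \<partial>\<gamma>)" for \<gamma> :: "('a \<times> 'a) measure"
  have Mb0: "Mb \<ge> 0" using Mb by simp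
  note mo1 = mom[OF m1 s1 Mb0] and mo2 = mom[OF m2 s2 Mb0]
  have if1: "integrable \<mu> f" by (rule int_growth[OF m1 s1 Mb0 ae1 fm fb p1])
  have if2: "integrable \<nu> f" by (rule int_growth[OF m2 s2 Mb0 ae2 fm fb p2])
  have nm: "(\<lambda>z::'a. (norm z)\<^sup>2) \<in> borel_measurable borel" by measurable
  have dm: "(\<lambda>p::'a\<times>'a. (norm (fst p - snd p))\<^sup>2) \<in> borel_measurable (borel \<Otimes>\<^sub>M borel)"
    by measurable
  have claim1: "\<Delta> \<le> K * sqrt A * sqrt (enn2real (I \<gamma>))"
    if g: "\<gamma> \<in> couplings \<mu> \<nu>" and fin: "I \<gamma> < \<infinity>" for \<gamma>
  proof -
    note c = coupling_basic[OF g]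
    have dmg: "(\<lambda>p::'a\<times>'a. (norm (fst p - snd p))\<^sup>2) \<in> borel_measurable \<gamma>"
      using dm measurable_cong_sets[OF c(2) refl] by blast
    have dint: "integrable \<gamma> (\<lambda>p. (norm (fst p - snd p))\<^sup>2)"
      by (rule integrableI_bounded[OF dmg]) (use fin in \<open>simp add: I_def\<close>)
    define i where "i = enn2real (I \<gamma>)"
    have iI: "ennreal (integral\<^sup>L \<gamma> (\<lambda>p. (norm (fst p - snd p))\<^sup>2)) = I \<gamma>"
      unfolding I_def using nn_integral_eq_integral[OF dint] by simp
    have inn: "integral\<^sup>L \<gamma> (\<lambda>p. (norm (fst p - snd p))\<^sup>2) \<ge> 0"
      by (rule integral_nonneg_AE) simp
    have ival: "integral\<^sup>L \<gamma> (\<lambda>p. (norm (fst p - snd p))\<^sup>2) = i"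
      unfolding i_def iI[symmetric] using inn by simp
    have i0: "i \<ge> 0" unfolding i_def by simp
    have f1: "integrable \<gamma> (\<lambda>p. f (fst p))" using coupling_int(3)[OF g fm if1] .
    have f2: "integrable \<gamma> (\<lambda>p. f (snd p))" using coupling_int(4)[OF g fm if2] .
    have n1: "integrable \<gamma> (\<lambda>p. (norm (fst p))\<^sup>2)" using coupling_int(3)[OF g nm mo1(1)] .
    have n2: "integrable \<gamma> (\<lambda>p. (norm (snd p))\<^sup>2)" using coupling_int(4)[OF g nm mo2(1)] .
    have aeX: "AE p in \<gamma>. fst p \<in> X \<and> snd p \<in> X" by (rule coupling_AE[OF g X ae1 ae2])
    have step: "\<Delta> \<le> K / 2 * (l * A + i / l)" if l: "l > 0" for l
    proof -
      define G where "G p = K * l * a\<^sup>2 + (2 * K * l) * (norm (fst p))\<^sup>2 + (2 * K * l) * (norm (snd p))\<^sup>2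
          + (K / (2 * l)) * (norm (fst p - snd p))\<^sup>2" for p :: "'a \<times> 'a"
      have Gint: "integrable \<gamma> G"
        unfolding G_def using n1 n2 dint c(1)
        by (intro Bochner_Integration.integrable_add integrable_mult_right)
           (auto simp: finite_measure.integrable_const prob_space.finite_measure)
      have "integral\<^sup>L \<gamma> G = K * l * a\<^sup>2 + (2 * K * l) * integral\<^sup>L \<gamma> (\<lambda>p. (norm (fst p))\<^sup>2)
          + (2 * K * l) * integral\<^sup>L \<gamma> (\<lambda>p. (norm (snd p))\<^sup>2) + (K / (2 * l)) * i"
        unfolding G_def using n1 n2 dint c(1) ival
        by (subst Bochner_Integration.integral_add; (intro Bochner_Integration.integrable_add integrable_mult_right)?;
            simp add: finite_measure.integrable_const prob_space.finite_measure prob_space.prob_space)+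
      also have "\<dots> \<le> K * l * a\<^sup>2 + (2 * K * l) * Mb + (2 * K * l) * Mb + (K / (2 * l)) * i"
        using coupling_int(1)[OF g nm] coupling_int(2)[OF g nm] mo1(2) mo2(2) K l
        by (intro add_mono mult_left_mono order_refl) auto
      also have "\<dots> = K / 2 * (l * A + i / l)"
        unfolding A_def using l by (simp add: field_simps)
      finally have GI: "integral\<^sup>L \<gamma> G \<le> K / 2 * (l * A + i / l)" .
      have "\<Delta> = \<bar>integral\<^sup>L \<gamma> (\<lambda>p. f (fst p) - f (snd p))\<bar>"
        unfolding \<Delta>_def using coupling_int(1)[OF g fm] coupling_int(2)[OF g fm] f1 f2 by simp
      also have "\<dots> \<le> integral\<^sup>L \<gamma> (\<lambda>p. \<bar>f (fst p) - f (snd p)\<bar>)"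
        by (rule integral_abs_bound)
      also have "\<dots> \<le> integral\<^sup>L \<gamma> G"
      proof (rule integral_mono_AE)
        show "integrable \<gamma> (\<lambda>p. \<bar>f (fst p) - f (snd p)\<bar>)" using f1 f2 by auto
        show "integrable \<gamma> G" by (rule Gint)
        show "AE p in \<gamma>. \<bar>f (fst p) - f (snd p)\<bar> \<le> G p"
          using aeX
        proof eventually_elim
          case (elim p)
          define x where "x = fst p"
          define y where "y = snd p"
          have xX: "x \<in> X" and yX: "y \<in> X" using elim by (auto simp: x_def y_def)
          have "\<bar>f x - f y\<bar> \<le> K * (a + norm x + norm y) * norm (x - y)"
            by (rule mvt_bound[OF cx der Db xX yX]) (use K a in auto)
          also have "\<dots> = K * ((a + norm x + norm y) * norm (x - y))" by simp
          also have "\<dots> \<le> K * ((l * (a + norm x + norm y)\<^sup>2 + (norm (x - y))\<^sup>2 / l) / 2)"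
            using amgm_lam[OF l] K by (intro mult_left_mono) auto
          also have "\<dots> \<le> K * ((l * (2 * a\<^sup>2 + 4 * (norm x)\<^sup>2 + 4 * (norm y)\<^sup>2) + (norm (x - y))\<^sup>2 / l) / 2)"
          proof -
            have "(a + norm x + norm y)\<^sup>2 \<le> 2 * a\<^sup>2 + 4 * (norm x)\<^sup>2 + 4 * (norm y)\<^sup>2"
              by (smt (verit) sum_squares_bound power2_sum zero_le_power2 power2_diff)
            then show ?thesis using K l by (intro mult_left_mono divide_right_mono add_mono) auto
          qed
          also have "\<dots> = G p" unfolding G_def x_def y_def using l by (simp add: field_simps)
          finally show ?case by (simp add: x_def y_def)
        qed
      qed
      finally show ?thesis using GI by simp
    qed
    have "\<Delta> \<le> K * sqrt A * sqrt i" by (rule opt_lam[OF step A i0 K])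
    then show ?thesis by (simp add: i_def)
  qed
  define \<gamma>0 where "\<gamma>0 = \<mu> \<Otimes>\<^sub>M \<nu>"
  have g0: "\<gamma>0 \<in> couplings \<mu> \<nu>" unfolding \<gamma>0_def by (rule prod_coupling[OF p1 p2 s1 s2])
  have I0: "I \<gamma>0 < \<infinity>"
  proof -
    note c = coupling_basic[OF g0]
    have n1: "integrable \<gamma>0 (\<lambda>p. (norm (fst p))\<^sup>2)" using coupling_int(3)[OF g0 nm mo1(1)] .
    have n2: "integrable \<gamma>0 (\<lambda>p. (norm (snd p))\<^sup>2)" using coupling_int(4)[OF g0 nm mo2(1)] .
    have int: "integrable \<gamma>0 (\<lambda>p. 2 * (norm (fst p))\<^sup>2 + 2 * (norm (snd p))\<^sup>2)"
      using n1 n2 by auto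
    have "I \<gamma>0 \<le> (\<integral>\<^sup>+ p. ennreal (2 * (norm (fst p))\<^sup>2 + 2 * (norm (snd p))\<^sup>2) \<partial>\<gamma>0)"
      unfolding I_def
    proof (intro nn_integral_mono ennreal_leI)
      fix p :: "'a \<times> 'a"
      have "norm (fst p - snd p) \<le> norm (fst p) + norm (snd p)" by (rule norm_triangle_ineq4)
      then have "(norm (fst p - snd p))\<^sup>2 \<le> (norm (fst p) + norm (snd p))\<^sup>2"
        by (intro power_mono) auto
      also have "\<dots> \<le> 2 * (norm (fst p))\<^sup>2 + 2 * (norm (snd p))\<^sup>2"
        by (smt (verit) power2_sum zero_le_power2 power2_diff)
      finally show "(norm (fst p - snd p))\<^sup>2 \<le> 2 * (norm (fst p))\<^sup>2 + 2 * (norm (snd p))\<^sup>2" .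
    qed
    also have "\<dots> = ennreal (integral\<^sup>L \<gamma>0 (\<lambda>p. 2 * (norm (fst p))\<^sup>2 + 2 * (norm (snd p))\<^sup>2))"
      by (rule nn_integral_eq_integral[OF int]) auto
    also have "\<dots> < \<infinity>" by simp
    finally show ?thesis .
  qed
  define J where "J = (INF \<gamma>\<in>couplings \<mu> \<nu>. I \<gamma>)"
  have W: "W2 \<mu> \<nu> = sqrt (enn2real J)" unfolding W2_def J_def I_def by simp
  have JI0: "J \<le> I \<gamma>0" unfolding J_def using g0 by (rule INF_lower)
  with I0 have Jfin: "J < \<infinity>" by (simp add: le_less_trans)
  have D0: "\<Delta> \<ge> 0" unfolding \<Delta>_def by simp
  have KA: "K\<^sup>2 * A > 0" using K A by simp
  have lower: "ennreal (\<Delta>\<^sup>2 / (K\<^sup>2 * A)) \<le> J"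
    unfolding J_def
  proof (rule INF_greatest)
    fix \<gamma> assume g: "\<gamma> \<in> couplings \<mu> \<nu>"
    show "ennreal (\<Delta>\<^sup>2 / (K\<^sup>2 * A)) \<le> I \<gamma>"
    proof (cases "I \<gamma> < \<infinity>")
      case False then show ?thesis by (simp add: top_unique not_less)
    next
      case True
      have h: "\<Delta> \<le> K * sqrt A * sqrt (enn2real (I \<gamma>))" by (rule claim1[OF g True])
      have "\<Delta>\<^sup>2 \<le> (K * sqrt A * sqrt (enn2real (I \<gamma>)))\<^sup>2"
        using h D0 by (intro power_mono) auto
      also have "\<dots> = K\<^sup>2 * A * enn2real (I \<gamma>)"
        using A by (simp add: power_mult_distrib)
      finally have "\<Delta>\<^sup>2 / (K\<^sup>2 * A) \<le> enn2real (I \<gamma>)"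
        using KA by (simp add: divide_le_eq mult.commute)
      then have "ennreal (\<Delta>\<^sup>2 / (K\<^sup>2 * A)) \<le> ennreal (enn2real (I \<gamma>))" by (rule ennreal_leI)
      also have "\<dots> = I \<gamma>" using True by (simp add: less_top[symmetric] ennreal_enn2real)
      finally show ?thesis .
    qed
  qed
  have "\<Delta>\<^sup>2 / (K\<^sup>2 * A) \<le> enn2real J"
  proof -
    have "ennreal (\<Delta>\<^sup>2 / (K\<^sup>2 * A)) \<le> ennreal (enn2real J)"
      using lower Jfin by (simp add: less_top[symmetric] ennreal_enn2real)
    then show ?thesis by (simp add: ennreal_le_iff)
  qed
  then have "\<Delta>\<^sup>2 \<le> K\<^sup>2 * A * enn2real J" using KA by (simp add: divide_le_eq mult.commute)
  then have "sqrt (\<Delta>\<^sup>2) \<le> sqrt (K\<^sup>2 * A * enn2real J)" by (rule real_sqrt_le_mono)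
  also have "sqrt (K\<^sup>2 * A * enn2real J) = K * sqrt A * sqrt (enn2real J)"
    using K by (simp add: real_sqrt_mult)
  finally have "\<Delta> \<le> K * sqrt A * sqrt (enn2real J)" using D0 by simp
  then show ?thesis unfolding \<Delta>_def A_def W .
qed


lemma cond_distr_meas:
  assumes cd: "cond_distr M F X B"
  shows "B \<in> measurable M (prob_algebra borel)"
proof -
  have "subalgebra M F" using cd unfolding cond_distr_def subalgebra_def by auto
  moreover have "B \<in> measurable F (prob_algebra borel)" using cd unfolding cond_distr_def by auto
  ultimately show ?thesis by (rule measurable_from_subalg)
qed

lemma cond_distr_space:
  assumes cd: "cond_distr M F X B" and w: "\<omega> \<in> space M"
  shows "prob_space (B \<omega>)" "sets (B \<omega>) = sets borel"
  using measurable_space[OF cond_distr_meas[OF cd] w] by (auto simp: space_prob_algebra)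

lemma cond_distr_support:
  fixes X :: "'w \<Rightarrow> 'a::euclidean_space"
  assumes cd: "cond_distr M F X B" and xin: "\<And>\<omega>. \<omega> \<in> space M \<Longrightarrow> X \<omega> \<in> S" and S: "S \<in> sets borel"
  shows "AE \<omega> in M. AE z in B \<omega>. z \<in> S"
proof -
  have Bm: "B \<in> measurable M (prob_algebra borel)" by (rule cond_distr_meas[OF cd])
  have sF: "space F = space M" using cd unfolding cond_distr_def by auto
  have GF: "space M \<in> sets F" using sets.top[of F] sF by simp
  have cS: "- S \<in> sets borel" using S by (rule borel_comp)
  have "emeasure M (space M \<inter> X -` (- S)) = (\<integral>\<^sup>+ \<omega>. indicator (space M) \<omega> * emeasure (B \<omega>) (- S) \<partial>M)"
    using cd GF cS unfolding cond_distr_def by blast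
  moreover have "space M \<inter> X -` (- S) = {}" using xin by auto
  ultimately have z: "(\<integral>\<^sup>+ \<omega>. indicator (space M) \<omega> * emeasure (B \<omega>) (- S) \<partial>M) = 0" by simp
  have em: "(\<lambda>\<omega>. emeasure (B \<omega>) (- S)) \<in> borel_measurable M"
    using measurable_compose[OF measurable_prob_algebraD[OF Bm] measurable_emeasure_subprob_algebra[OF cS]] .
  have m: "(\<lambda>\<omega>. indicator (space M) \<omega> * emeasure (B \<omega>) (- S)) \<in> borel_measurable M"
    using em by measurable
  have A1: "AE \<omega> in M. indicator (space M) \<omega> * emeasure (B \<omega>) (- S) = 0"
    using z nn_integral_0_iff_AE[OF m] by simp
  have A2: "AE \<omega> in M. indicator (space M) \<omega> * emeasure (B \<omega>) (- S) = 0 \<longrightarrow> (AE z in B \<omega>. z \<in> S)"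
  proof (rule AE_I2, rule impI)
    fix \<omega> assume w: "\<omega> \<in> space M" and e: "indicator (space M) \<omega> * emeasure (B \<omega>) (- S) = 0"
    have sB: "sets (B \<omega>) = sets borel" using cond_distr_space[OF cd w] by simp
    have e0: "emeasure (B \<omega>) (- S) = 0" using e w by simp
    have spB: "space (B \<omega>) = UNIV" using sets_eq_imp_space_eq[OF sB] by simp
    show "AE z in B \<omega>. z \<in> S"
      by (rule AE_I'[of "- S"]) (use e0 cS sB spB in \<open>auto simp: null_sets_def\<close>)
  qed
  show ?thesis using AE_mp[OF A1 A2] .
qed

lemma cbar_meas:
  fixes c :: "'a::euclidean_space \<Rightarrow> 'b::euclidean_space \<Rightarrow> real"
  assumes cm: "(\<lambda>p. c (fst p) (snd p)) \<in> borel_measurable borel"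
    and Bm: "B \<in> measurable M (prob_algebra borel)" and um: "u \<in> borel_measurable M"
  shows "(\<lambda>\<omega>. cbar c (B \<omega>) (u \<omega>)) \<in> borel_measurable M"
proof -
  have cm2: "(\<lambda>p. c (fst p) (snd p)) \<in> borel_measurable (borel \<Otimes>\<^sub>M borel)"
    using cm by (simp add: borel_prod)
  have "(\<lambda>(\<omega>, z). c z (u \<omega>)) \<in> borel_measurable (M \<Otimes>\<^sub>M borel)"
  proof -
    have "(\<lambda>q. (snd q, u (fst q))) \<in> measurable (M \<Otimes>\<^sub>M borel) (borel \<Otimes>\<^sub>M borel)"
      using um by measurable
    from measurable_compose[OF this cm2] show ?thesis by (simp add: case_prod_beta)
  qed
  from integral_measurable_subprob_algebra2[OF this measurable_prob_algebraD[OF Bm]]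
  show ?thesis unfolding cbar_def by simp
qed

lemma cbar_bound:
  fixes \<mu> :: "'a::euclidean_space measure" and f :: "'a \<Rightarrow> real"
  assumes p: "prob_space \<mu>" and s: "sets \<mu> = sets borel" and ae: "AE z in \<mu>. z \<in> X"
    and m: "(\<integral>\<^sup>+ z. ennreal ((norm z)\<^sup>2) \<partial>\<mu>) \<le> ennreal Mb" and Mb: "Mb \<ge> 0"
    and fm: "f \<in> borel_measurable borel"
    and fb: "\<And>z. z \<in> X \<Longrightarrow> \<bar>f z\<bar> \<le> Kc * (1 + (norm z)\<^sup>2 + V)"
    and Kc: "Kc \<ge> 0" and V: "V \<ge> 0"
  shows "\<bar>integral\<^sup>L \<mu> f\<bar> \<le> Kc * (1 + Mb + V)"
proof -
  note mo = mom[OF m s Mb]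
  have fb': "\<bar>f z\<bar> \<le> (Kc * (1 + V)) * (1 + (norm z)\<^sup>2)" if "z \<in> X" for z
  proof -
    have "Kc * (1 + (norm z)\<^sup>2 + V) \<le> (Kc * (1 + V)) * (1 + (norm z)\<^sup>2)"
      using Kc V by (simp add: algebra_simps mult_nonneg_nonneg)
    then show ?thesis using fb[OF that] by linarith
  qed
  have fi: "integrable \<mu> f" by (rule int_growth[OF m s Mb ae fm fb' p])
  have gi: "integrable \<mu> (\<lambda>z. Kc * (1 + V) + Kc * (norm z)\<^sup>2)"
    using mo(1) p by (intro Bochner_Integration.integrable_add integrable_mult_right)
      (auto simp: finite_measure.integrable_const prob_space.finite_measure)
  have "\<bar>integral\<^sup>L \<mu> f\<bar> \<le> integral\<^sup>L \<mu> (\<lambda>z. \<bar>f z\<bar>)" by (rule integral_abs_bound)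
  also have "\<dots> \<le> integral\<^sup>L \<mu> (\<lambda>z. Kc * (1 + V) + Kc * (norm z)\<^sup>2)"
  proof (rule integral_mono_AE)
    show "integrable \<mu> (\<lambda>z. \<bar>f z\<bar>)" using fi by auto
    show "integrable \<mu> (\<lambda>z. Kc * (1 + V) + Kc * (norm z)\<^sup>2)" by (rule gi)
    show "AE z in \<mu>. \<bar>f z\<bar> \<le> Kc * (1 + V) + Kc * (norm z)\<^sup>2"
      using ae by eventually_elim (use fb in \<open>auto simp: algebra_simps\<close>)
  qed
  also have "\<dots> = Kc * (1 + V) + Kc * integral\<^sup>L \<mu> (\<lambda>z. (norm z)\<^sup>2)"
    using mo(1) p by (simp add: prob_space.prob_space finite_measure.integrable_const prob_space.finite_measure)
  also have "\<dots> \<le> Kc * (1 + V) + Kc * Mb" using mo(2) Kc by (simp add: mult_left_mono)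
  also have "\<dots> = Kc * (1 + Mb + V)" by (simp add: algebra_simps)
  finally show ?thesis .
qed

lemma const_ineq:
  fixes s M U :: real
  assumes "s \<ge> 0" "s\<^sup>2 \<le> U" "M \<ge> 0"
  shows "sqrt (2 * (1 + s)\<^sup>2 + 8 * M) \<le> sqrt (3 + 24 * M) * (1 + U)"
proof -
  have U: "U \<ge> 0" using assms(2) by (smt (verit) zero_le_power2)
  have "2 * (1 + s)\<^sup>2 \<le> 3 * (1 + s\<^sup>2)\<^sup>2"
  proof -
    have "3 * (1 + s\<^sup>2)\<^sup>2 - 2 * (1 + s)\<^sup>2 = (1 - 2 * s)\<^sup>2 + 3 * s ^ 4"
      by (simp add: power2_eq_square power4_eq_xxxx algebra_simps)
    moreover have "(1 - 2 * s)\<^sup>2 + 3 * s ^ 4 \<ge> 0" by simp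
    ultimately show ?thesis by linarith
  qed
  also have "\<dots> \<le> 3 * (1 + U)\<^sup>2" using assms by (intro mult_left_mono power_mono) auto
  finally have a: "2 * (1 + s)\<^sup>2 \<le> 3 * (1 + U)\<^sup>2" .
  have b: "8 * M \<le> 24 * M * (1 + U)\<^sup>2"
  proof -
    have "1 * 1 \<le> (1 + U) * (1 + U)" using U by (intro mult_mono) auto
    then have "1 \<le> (1 + U)\<^sup>2" by (simp add: power2_eq_square)
    then have "M * 1 \<le> M * (1 + U)\<^sup>2" using assms(3) by (intro mult_left_mono)
    then show ?thesis using assms(3) by (simp only: mult.assoc)
  qed
  have "sqrt (2 * (1 + s)\<^sup>2 + 8 * M) \<le> sqrt ((3 + 24 * M) * (1 + U)\<^sup>2)"
    using a b by (intro real_sqrt_le_mono) (simp add: algebra_simps)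
  also have "\<dots> = sqrt (3 + 24 * M) * (1 + U)" using U by (simp add: real_sqrt_mult)
  finally show ?thesis .
qed


lemma series_bound:
  fixes a :: "nat \<Rightarrow> real"
  assumes ab: "\<And>t. \<bar>a t\<bar> \<le> B" and g: "0 < g" "g < 1"
  shows "summable (\<lambda>t. g ^ t * a t)" "summable (\<lambda>t. g ^ t * \<bar>a t\<bar>)"
    "\<bar>\<Sum>t. g ^ t * a t\<bar> \<le> B / (1 - g)"
proof -
  have sg: "summable (\<lambda>t. g ^ t * B)" using g by (intro summable_mult2) simp
  have b1: "norm (g ^ t * a t) \<le> g ^ t * B" for t
    using ab[of t] g by (simp add: abs_mult mult_left_mono)
  have b2: "norm (g ^ t * \<bar>a t\<bar>) \<le> g ^ t * B" for t
    using ab[of t] g by (simp add: abs_mult mult_left_mono)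
  show s1: "summable (\<lambda>t. g ^ t * a t)"
    by (rule summable_comparison_test[OF _ sg]) (use b1 in auto)
  show s2: "summable (\<lambda>t. g ^ t * \<bar>a t\<bar>)"
    by (rule summable_comparison_test[OF _ sg]) (use b2 in auto)
  have sn: "summable (\<lambda>t. norm (g ^ t * a t))"
    by (rule summable_comparison_test[OF _ sg]) (use b1 in auto)
  have "\<bar>\<Sum>t. g ^ t * a t\<bar> \<le> (\<Sum>t. norm (g ^ t * a t))"
    using summable_norm[OF sn] by simp
  also have "\<dots> \<le> (\<Sum>t. g ^ t * B)" by (rule suminf_le[OF b1 sn sg])
  also have "\<dots> = B / (1 - g)"
    using g by (simp add: suminf_mult2[symmetric] suminf_geometric)
  finally show "\<bar>\<Sum>t. g ^ t * a t\<bar> \<le> B / (1 - g)" .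
qed

theorem lemma5:
  fixes M :: "'w measure"
    and X :: "'a::euclidean_space set" and U :: "'b::euclidean_space set"
    and Y :: "'c::euclidean_space set"
    and P :: "'a \<Rightarrow> 'b \<Rightarrow> 'a measure" and Obs :: "'a \<Rightarrow> 'c measure"
    and c :: "'a \<Rightarrow> 'b \<Rightarrow> real" and Dc :: "'a \<Rightarrow> 'b \<Rightarrow> 'a"
    and g :: real and H :: nat
    and \<pi> :: "'a measure \<Rightarrow> 'b"
    and x :: "nat \<Rightarrow> 'w \<Rightarrow> 'a" and y :: "nat \<Rightarrow> 'w \<Rightarrow> 'c" and u :: "nat \<Rightarrow> 'w \<Rightarrow> 'b"
    and b :: "nat \<Rightarrow> 'w \<Rightarrow> 'a measure" and bh :: "nat \<Rightarrow> 'w \<Rightarrow> 'a measure"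
    and Kc Kg M\<^sub>\<pi> U\<^sub>\<pi> :: real
  assumes prob: "prob_space M"
    and X_borel: "X \<in> sets borel" and U_borel: "U \<in> sets borel" and Y_borel: "Y \<in> sets borel"
    and g: "0 < g" "g < 1"
    (* closed-loop processes *)
    and x_meas: "\<And>t. x t \<in> borel_measurable M"
    and y_meas: "\<And>t. y t \<in> borel_measurable M"
    and u_meas: "\<And>t. u t \<in> borel_measurable M"
    and x_in: "\<And>t \<omega>. \<omega> \<in> space M \<Longrightarrow> x t \<omega> \<in> X"
    and y_in: "\<And>t \<omega>. \<omega> \<in> space M \<Longrightarrow> y t \<omega> \<in> Y"
    and u_in: "\<And>t \<omega>. \<omega> \<in> space M \<Longrightarrow> u t \<omega> \<in> U"
    (* x_{t+1} ~ P(. | x_t, u_t) given the full past *)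
    and trans: "\<And>t. cond_distr M
        (sigma (space M) (\<Union>k\<in>{..t}. pre_sets M (x k) \<union> pre_sets M (y k) \<union> pre_sets M (u k)))
        (x (Suc t)) (\<lambda>\<omega>. P (x t \<omega>) (u t \<omega>))"
    (* y_t ~ O(. | x_t) given the past *)
    and obs: "\<And>t. cond_distr M
        (sigma (space M) ((\<Union>k\<in>{..t}. pre_sets M (x k)) \<union>
                          (\<Union>k\<in>{..<t}. pre_sets M (y k) \<union> pre_sets M (u k))))
        (y t) (\<lambda>\<omega>. Obs (x t \<omega>))"
    (* beliefs and finite memory belief approximations *)
    and belief: "\<And>t. cond_distr M (hist_alg M y u 0 t) (x t) (b t)"
    and fm_belief: "\<And>t. cond_distr M (hist_alg M y u (t - H) t) (x t) (bh t)"
    (* belief-based policy *)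
    and policy: "\<And>t \<omega>. \<omega> \<in> space M \<Longrightarrow> u t \<omega> = \<pi> (b t \<omega>)"
    (* regularity of the stage cost *)
    and X_convex: "convex X"
    and c_meas: "(\<lambda>p. c (fst p) (snd p)) \<in> borel_measurable borel"
    and c_diff: "\<And>z v. z \<in> X \<Longrightarrow> v \<in> U \<Longrightarrow>
        ((\<lambda>w. c w v) has_derivative (\<lambda>h. Dc z v \<bullet> h)) (at z within X)"
    and Dc_cont: "\<And>v. v \<in> U \<Longrightarrow> continuous_on X (\<lambda>w. Dc w v)"
    and Kc: "0 < Kc" and Kg: "0 < Kg"
    and c_growth: "\<And>z v. z \<in> X \<Longrightarrow> v \<in> U \<Longrightarrow>
        \<bar>c z v\<bar> \<le> Kc * (1 + (norm z)\<^sup>2 + (norm v)\<^sup>2)"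
    and Dc_growth: "\<And>z v. z \<in> X \<Longrightarrow> v \<in> U \<Longrightarrow>
        norm (Dc z v) \<le> Kg * (1 + norm z + norm v)"
    (* moment bounds *)
    and M_pos: "0 < M\<^sub>\<pi>"
    and moments: "AE \<omega> in M. \<forall>t.
        (\<integral>\<^sup>+ z. ennreal ((norm z)\<^sup>2) \<partial>(b t \<omega>)) \<le> ennreal M\<^sub>\<pi> \<and>
        (\<integral>\<^sup>+ z. ennreal ((norm z)\<^sup>2) \<partial>(bh t \<omega>)) \<le> ennreal M\<^sub>\<pi>"
    and U_pos: "0 < U\<^sub>\<pi>"
    and input_bound: "AE \<omega> in M. \<forall>t. (norm (u t \<omega>))\<^sup>2 \<le> U\<^sub>\<pi>"
  shows "ennreal \<bar>disc_cost M g c b u - disc_cost M g c bh u\<bar>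
     \<le> ennreal ((Kg * sqrt (3 + 24 * M\<^sub>\<pi>) * (1 + U\<^sub>\<pi>)) / (1 - g)) * belief_mismatch M b bh"
proof -
  interpret P: prob_space M by (rule prob)
  define L where "L = Kg * sqrt (3 + 24 * M\<^sub>\<pi>) * (1 + U\<^sub>\<pi>)"
  have Lpos: "L > 0" unfolding L_def using Kg M_pos U_pos by (intro mult_pos_pos) auto
  define B0 where "B0 = Kc * (1 + M\<^sub>\<pi> + U\<^sub>\<pi>)"
  have B0pos: "B0 \<ge> 0" unfolding B0_def using Kc M_pos U_pos by simp
  define cb where "cb t \<omega> = cbar c (b t \<omega>) (u t \<omega>)" for t \<omega>
  define ch where "ch t \<omega> = cbar c (bh t \<omega>) (u t \<omega>)" for t \<omega>
  define W where "W t \<omega> = W2 (b t \<omega>) (bh t \<omega>)" for t \<omega>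
  have bm: "b t \<in> measurable M (prob_algebra borel)" for t using cond_distr_meas[OF belief] .
  have bhm: "bh t \<in> measurable M (prob_algebra borel)" for t using cond_distr_meas[OF fm_belief] .
  have cbm[measurable]: "cb t \<in> borel_measurable M" for t
    unfolding cb_def by (rule cbar_meas[OF c_meas bm u_meas])
  have chm[measurable]: "ch t \<in> borel_measurable M" for t
    unfolding ch_def by (rule cbar_meas[OF c_meas bhm u_meas])
  have supp: "AE \<omega> in M. \<forall>t. (AE z in b t \<omega>. z \<in> X) \<and> (AE z in bh t \<omega>. z \<in> X)"
    unfolding AE_all_countable AE_conj_iff
    using cond_distr_support[OF belief x_in X_borel] cond_distr_support[OF fm_belief x_in X_borel]
    by blast
  have M0: "M\<^sub>\<pi> \<ge> 0" using M_pos by simp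
  have good: "AE \<omega> in M. \<forall>t. \<bar>cb t \<omega>\<bar> \<le> B0 \<and> \<bar>ch t \<omega>\<bar> \<le> B0 \<and> \<bar>cb t \<omega> - ch t \<omega>\<bar> \<le> L * W t \<omega>"
    using supp moments input_bound AE_space
  proof eventually_elim
    case (elim \<omega>)
    show ?case
    proof (intro allI conjI)
      fix t
      have w: "\<omega> \<in> space M" using elim by simp
      note sb = cond_distr_space[OF belief w] and sbh = cond_distr_space[OF fm_belief w]
      define v where "v = u t \<omega>"
      have vU: "v \<in> U" unfolding v_def using u_in[OF w] .
      have v2: "(norm v)\<^sup>2 \<le> U\<^sub>\<pi>" unfolding v_def using elim by simp
      have suppb: "AE z in b t \<omega>. z \<in> X" and supph: "AE z in bh t \<omega>. z \<in> X" using elim by auto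
      have mb: "(\<integral>\<^sup>+ z. ennreal ((norm z)\<^sup>2) \<partial>(b t \<omega>)) \<le> ennreal M\<^sub>\<pi>"
        and mh: "(\<integral>\<^sup>+ z. ennreal ((norm z)\<^sup>2) \<partial>(bh t \<omega>)) \<le> ennreal M\<^sub>\<pi>" using elim by auto
      have pm: "(\<lambda>z. (z, v)) \<in> measurable borel (borel \<Otimes>\<^sub>M borel)" by measurable
      then have pm': "(\<lambda>z::'a. (z, v)) \<in> measurable borel borel" by (simp add: borel_prod)
      have fm: "(\<lambda>z. c z v) \<in> borel_measurable borel"
        using measurable_compose[OF pm' c_meas] by simp
      have fb: "\<bar>c z v\<bar> \<le> Kc * (1 + (norm z)\<^sup>2 + (norm v)\<^sup>2)" if "z \<in> X" for z
        using c_growth[OF that vU] .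
      have "\<bar>cb t \<omega>\<bar> \<le> Kc * (1 + M\<^sub>\<pi> + (norm v)\<^sup>2)"
        unfolding cb_def cbar_def v_def[symmetric]
        by (rule cbar_bound[OF sb suppb mb M0 fm fb]) (use Kc in auto)
      also have "\<dots> \<le> B0" unfolding B0_def using v2 Kc by (intro mult_left_mono) auto
      finally show "\<bar>cb t \<omega>\<bar> \<le> B0" .
      have "\<bar>ch t \<omega>\<bar> \<le> Kc * (1 + M\<^sub>\<pi> + (norm v)\<^sup>2)"
        unfolding ch_def cbar_def v_def[symmetric]
        by (rule cbar_bound[OF sbh supph mh M0 fm fb]) (use Kc in auto)
      also have "\<dots> \<le> B0" unfolding B0_def using v2 Kc by (intro mult_left_mono) auto
      finally show "\<bar>ch t \<omega>\<bar> \<le> B0" .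
      have fb2: "\<bar>c z v\<bar> \<le> (Kc * (1 + (norm v)\<^sup>2)) * (1 + (norm z)\<^sup>2)" if "z \<in> X" for z
      proof -
        have "Kc * (1 + (norm z)\<^sup>2 + (norm v)\<^sup>2) \<le> (Kc * (1 + (norm v)\<^sup>2)) * (1 + (norm z)\<^sup>2)"
          using Kc by (simp add: algebra_simps mult_nonneg_nonneg)
        then show ?thesis using fb[OF that] by linarith
      qed
      have der: "((\<lambda>w. c w v) has_derivative (\<lambda>h. Dc z v \<bullet> h)) (at z within X)" if "z \<in> X" for z
        using c_diff[OF that vU] .
      have Db: "norm (Dc z v) \<le> Kg * ((1 + norm v) + norm z)" if "z \<in> X" for z
        using Dc_growth[OF that vU] by (simp add: algebra_simps)
      have a0: "0 \<le> 1 + norm v" by (simp add: add_nonneg_nonneg)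
      have "\<bar>cb t \<omega> - ch t \<omega>\<bar> \<le> Kg * sqrt (2 * (1 + norm v)\<^sup>2 + 8 * M\<^sub>\<pi>) * W t \<omega>"
        unfolding cb_def ch_def cbar_def v_def[symmetric] W_def
        by (rule core[OF sb(1) sbh(1) sb(2) sbh(2) X_borel X_convex suppb supph fm der Db Kg a0 M_pos fb2 mb mh])
      also have "\<dots> \<le> L * W t \<omega>"
      proof -
        have "sqrt (2 * (1 + norm v)\<^sup>2 + 8 * M\<^sub>\<pi>) \<le> sqrt (3 + 24 * M\<^sub>\<pi>) * (1 + U\<^sub>\<pi>)"
          by (rule const_ineq[OF _ v2 M0]) simp
        moreover have "W t \<omega> \<ge> 0" unfolding W_def W2_def by simp
        ultimately show ?thesis unfolding L_def using Kg
          by (intro mult_right_mono) (auto simp: mult.assoc intro: mult_left_mono)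
      qed
      finally show "\<bar>cb t \<omega> - ch t \<omega>\<bar> \<le> L * W t \<omega>" .
    qed
  qed
  define Sb where "Sb \<omega> = (\<Sum>t. g ^ t * cb t \<omega>)" for \<omega>
  define Sh where "Sh \<omega> = (\<Sum>t. g ^ t * ch t \<omega>)" for \<omega>
  have db: "disc_cost M g c b u = integral\<^sup>L M Sb" unfolding disc_cost_def Sb_def cb_def by simp
  have dh: "disc_cost M g c bh u = integral\<^sup>L M Sh" unfolding disc_cost_def Sh_def ch_def by simp
  have Sbm[measurable]: "Sb \<in> borel_measurable M" unfolding Sb_def by measurable
  have Shm[measurable]: "Sh \<in> borel_measurable M" unfolding Sh_def by measurable
  have Sbi: "integrable M Sb"
  proof (rule Bochner_Integration.integrable_bound[OF P.integrable_const[of "B0 / (1 - g)"] Sbm])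
    show "AE \<omega> in M. norm (Sb \<omega>) \<le> norm (B0 / (1 - g))"
      using good
    proof eventually_elim
      case (elim \<omega>)
      then have "\<bar>Sb \<omega>\<bar> \<le> B0 / (1 - g)" unfolding Sb_def by (intro series_bound(3)[OF _ g]) blast
      then show ?case using B0pos g by simp
    qed
  qed
  have Shi: "integrable M Sh"
  proof (rule Bochner_Integration.integrable_bound[OF P.integrable_const[of "B0 / (1 - g)"] Shm])
    show "AE \<omega> in M. norm (Sh \<omega>) \<le> norm (B0 / (1 - g))"
      using good
    proof eventually_elim
      case (elim \<omega>)
      then have "\<bar>Sh \<omega>\<bar> \<le> B0 / (1 - g)" unfolding Sh_def by (intro series_bound(3)[OF _ g]) blast
      then show ?case using B0pos g by simp
    qed
  qed
  define d where "d t \<omega> = ennreal (g ^ t * \<bar>cb t \<omega> - ch t \<omega>\<bar>)" for t \<omega>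
  have dm[measurable]: "d t \<in> borel_measurable M" for t unfolding d_def by measurable
  have pw: "AE \<omega> in M. ennreal \<bar>Sb \<omega> - Sh \<omega>\<bar> \<le> (\<Sum>t. d t \<omega>)"
    using good
  proof eventually_elim
    case (elim \<omega>)
    have bb: "\<bar>cb t \<omega>\<bar> \<le> B0" "\<bar>ch t \<omega>\<bar> \<le> B0" for t using elim by auto
    have bd: "\<bar>cb t \<omega> - ch t \<omega>\<bar> \<le> 2 * B0" for t using bb[of t] by linarith
    note s1 = series_bound[of "\<lambda>t. cb t \<omega>", OF bb(1) g]
    note s2 = series_bound[of "\<lambda>t. ch t \<omega>", OF bb(2) g]
    note s3 = series_bound[of "\<lambda>t. cb t \<omega> - ch t \<omega>", OF bd g]
    have "Sb \<omega> - Sh \<omega> = (\<Sum>t. g ^ t * cb t \<omega> - g ^ t * ch t \<omega>)"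
      unfolding Sb_def Sh_def by (rule suminf_diff[OF s1(1) s2(1)])
    also have "\<dots> = (\<Sum>t. g ^ t * (cb t \<omega> - ch t \<omega>))" by (simp add: right_diff_distrib)
    finally have e: "Sb \<omega> - Sh \<omega> = (\<Sum>t. g ^ t * (cb t \<omega> - ch t \<omega>))" .
    have sa: "summable (\<lambda>t. \<bar>g ^ t * (cb t \<omega> - ch t \<omega>)\<bar>)"
      using s3(2) g by (simp add: abs_mult)
    have "\<bar>Sb \<omega> - Sh \<omega>\<bar> \<le> (\<Sum>t. \<bar>g ^ t * (cb t \<omega> - ch t \<omega>)\<bar>)"
      unfolding e by (rule summable_rabs[OF sa])
    also have "\<dots> = (\<Sum>t. g ^ t * \<bar>cb t \<omega> - ch t \<omega>\<bar>)" using g by (simp add: abs_mult)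
    finally have "ennreal \<bar>Sb \<omega> - Sh \<omega>\<bar> \<le> ennreal (\<Sum>t. g ^ t * \<bar>cb t \<omega> - ch t \<omega>\<bar>)"
      by (rule ennreal_leI)
    also have "\<dots> = (\<Sum>t. d t \<omega>)" unfolding d_def
      by (rule suminf_ennreal2[symmetric]) (use s3(2) g in auto)
    finally show ?case .
  qed
  define \<epsilon> where "\<epsilon> = belief_mismatch M b bh"
  have per_t: "integral\<^sup>N M (d t) \<le> ennreal (g ^ t * L) * \<epsilon>" for t
  proof -
    have "integral\<^sup>N M (d t) = (\<integral>\<^sup>+ \<omega>. ennreal (g ^ t * L) * ennreal (\<bar>cb t \<omega> - ch t \<omega>\<bar> / L) \<partial>M)"
      unfolding d_def using Lpos g
      by (intro nn_integral_cong) (simp add: ennreal_mult[symmetric])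
    also have "\<dots> = ennreal (g ^ t * L) * (\<integral>\<^sup>+ \<omega>. ennreal (\<bar>cb t \<omega> - ch t \<omega>\<bar> / L) \<partial>M)"
      by (rule nn_integral_cmult) measurable
    also have "\<dots> \<le> ennreal (g ^ t * L) * (\<integral>\<^sup>+ \<omega>. ennreal (W2 (b t \<omega>) (bh t \<omega>)) \<partial>M)"
    proof (intro mult_left_mono nn_integral_mono_AE)
      show "AE \<omega> in M. ennreal (\<bar>cb t \<omega> - ch t \<omega>\<bar> / L) \<le> ennreal (W2 (b t \<omega>) (bh t \<omega>))"
        using good
      proof eventually_elim
        case (elim \<omega>)
        then have "\<bar>cb t \<omega> - ch t \<omega>\<bar> \<le> L * W t \<omega>" by blast
        then have "\<bar>cb t \<omega> - ch t \<omega>\<bar> / L \<le> W t \<omega>" using Lpos by (simp add: divide_le_eq mult.commute)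
        then show ?case unfolding W_def by (rule ennreal_leI)
      qed
    qed simp
    also have "\<dots> \<le> ennreal (g ^ t * L) * \<epsilon>"
      unfolding \<epsilon>_def belief_mismatch_def by (intro mult_left_mono SUP_upper) auto
    finally show ?thesis .
  qed
  have geo: "(\<Sum>t. ennreal (g ^ t * L)) = ennreal (L / (1 - g))"
  proof -
    have sm: "summable (\<lambda>t. g ^ t * L)" using g by (intro summable_mult2) simp
    have "(\<Sum>t. ennreal (g ^ t * L)) = ennreal (\<Sum>t. g ^ t * L)"
      by (rule suminf_ennreal2) (use sm g Lpos in auto)
    also have "(\<Sum>t. g ^ t * L) = L / (1 - g)"
      using g by (simp add: suminf_mult2[symmetric] suminf_geometric)
    finally show ?thesis .
  qed
  have "ennreal \<bar>disc_cost M g c b u - disc_cost M g c bh u\<bar> = ennreal \<bar>integral\<^sup>L M (\<lambda>\<omega>. Sb \<omega> - Sh \<omega>)\<bar>"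
    unfolding db dh using Sbi Shi by simp
  also have "\<dots> \<le> ennreal (integral\<^sup>L M (\<lambda>\<omega>. \<bar>Sb \<omega> - Sh \<omega>\<bar>))"
    by (rule ennreal_leI) (rule integral_abs_bound)
  also have "\<dots> = (\<integral>\<^sup>+ \<omega>. ennreal \<bar>Sb \<omega> - Sh \<omega>\<bar> \<partial>M)"
    by (rule nn_integral_eq_integral[symmetric]) (use Sbi Shi in auto)
  also have "\<dots> \<le> (\<integral>\<^sup>+ \<omega>. (\<Sum>t. d t \<omega>) \<partial>M)"
    by (rule nn_integral_mono_AE[OF pw])
  also have "\<dots> = (\<Sum>t. integral\<^sup>N M (d t))"
    by (rule nn_integral_suminf) measurable
  also have "\<dots> \<le> (\<Sum>t. ennreal (g ^ t * L) * \<epsilon>)"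
    by (intro suminf_le per_t summableI)
  also have "\<dots> = ennreal (L / (1 - g)) * \<epsilon>" by (simp add: geo)
  finally show ?thesis unfolding L_def \<epsilon>_def .
qed

end
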